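(* Let $V$ be an amenable collection of vectors subordinate to a $\mathbb{Q}$-nef partition $E_1,\dots,E_{k+1}$ of a complete fan $\Sigma$ with functions $\varphi_1,\dots,\varphi_{k+1}$. Let $C$ be a minimal cone of $\Sigma$ such that $C\cap M_V$ is $1$-dimensional. Then there is a point $\rho\in C\cap M_V\cap M$ with $\varphi_{k+1}(\rho)=1$.
   Context: $M$ lattice of rank $n$, $N=\mathrm{Hom}(M,\mathbb{Z})$; $\Sigma$ complete fan of strictly convex rational cones in $M_\mathbb{R}$, $\Sigma[1]$ primitive ray generators. $\mathbb{Q}$-nef partition: ordered partition $\Sigma[1]=E_1\sqcup\dots\sqcup E_{k+1}$ with convex functions $\varphi_i(v)=\max_C\langle u_{i,C},v\rangle$ ($u_{i,C}\in N\otimes\mathbb{Q}$, $C$ maximal cones), linear on each cone of $\Sigma$, with $\varphi_i(\rho)=\delta_{ij}$ for $\rho\in E_j$. Amenable collection: $V=\{v_1,\dots,v_k\}\subset N$ with $\langle v_i,\rho\rangle=-1$ on $E_i$, $\ge0$ on $E_j$ for $i<j\le k+1$, $=0$ on $E_j$ for $j<i$. $M_V=\{u\in M_\mathbb{R}:\langle v_i,u\rangle=0\ \forall i\}$. *)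

theory Defs
  imports "HOL-Analysis.Analysis"
begin

text \<open>The lattice M is the set of integer points of real^'n (rank n = CARD('n));
  N = Hom(M,Z) is identified with the integer points of real^'n via the inner product.\<close>

definition lattice_pt :: "real^'n \<Rightarrow> bool" where
  "lattice_pt x \<longleftrightarrow> (\<forall>i. x $ i \<in> \<int>)"

definition rational_pt :: "real^'n \<Rightarrow> bool" where
  "rational_pt x \<longleftrightarrow> (\<forall>i. x $ i \<in> \<rat>)"

definition rat_poly_cone :: "(real^'n) set \<Rightarrow> bool" where
  "rat_poly_cone \<sigma> \<longleftrightarrow> (\<exists>S. finite S \<and> (\<forall>x\<in>S. lattice_pt x) \<and>
      \<sigma> = {\<Sum>x\<in>S. c x *\<^sub>R x | c. \<forall>x\<in>S. c x \<ge> 0})"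

definition strictly_convex_cone :: "(real^'n) set \<Rightarrow> bool" where
  "strictly_convex_cone \<sigma> \<longleftrightarrow> \<sigma> \<inter> uminus ` \<sigma> = {0}"

definition is_fan :: "(real^'n) set set \<Rightarrow> bool" where
  "is_fan \<Sigma> \<longleftrightarrow> finite \<Sigma> \<and>
     (\<forall>\<sigma>\<in>\<Sigma>. rat_poly_cone \<sigma> \<and> strictly_convex_cone \<sigma>) \<and>
     (\<forall>\<sigma>\<in>\<Sigma>. \<forall>F. F face_of \<sigma> \<and> F \<noteq> {} \<longrightarrow> F \<in> \<Sigma>) \<and>
     (\<forall>\<sigma>\<in>\<Sigma>. \<forall>\<tau>\<in>\<Sigma>. (\<sigma> \<inter> \<tau>) face_of \<sigma> \<and> (\<sigma> \<inter> \<tau>) face_of \<tau>)"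

definition complete_fan :: "(real^'n) set set \<Rightarrow> bool" where
  "complete_fan \<Sigma> \<longleftrightarrow> is_fan \<Sigma> \<and> \<Union>\<Sigma> = UNIV"

definition primitive_generator :: "real^'n \<Rightarrow> (real^'n) set \<Rightarrow> bool" where
  "primitive_generator \<rho> \<sigma> \<longleftrightarrow> \<rho> \<in> \<sigma> \<and> lattice_pt \<rho> \<and> \<rho> \<noteq> 0 \<and>
     (\<forall>x\<in>\<sigma>. lattice_pt x \<longrightarrow> (\<exists>m::nat. x = real m *\<^sub>R \<rho>))"

definition rays :: "(real^'n) set set \<Rightarrow> (real^'n) set" where
  "rays \<Sigma> = {\<rho>. \<exists>\<sigma>\<in>\<Sigma>. aff_dim \<sigma> = 1 \<and> primitive_generator \<rho> \<sigma>}"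

definition maximal_cones :: "(real^'n) set set \<Rightarrow> (real^'n) set set" where
  "maximal_cones \<Sigma> = {\<sigma>\<in>\<Sigma>. \<forall>\<tau>\<in>\<Sigma>. \<sigma> \<subseteq> \<tau> \<longrightarrow> \<tau> = \<sigma>}"

definition Qnef_partition ::
    "(real^'n) set set \<Rightarrow> nat \<Rightarrow> (nat \<Rightarrow> (real^'n) set) \<Rightarrow> (nat \<Rightarrow> real^'n \<Rightarrow> real) \<Rightarrow> bool" where
  "Qnef_partition \<Sigma> k E \<phi> \<longleftrightarrow>
     (\<Union>j\<in>{1..k+1}. E j) = rays \<Sigma> \<and>
     (\<forall>i\<in>{1..k+1}. \<forall>j\<in>{1..k+1}. i \<noteq> j \<longrightarrow> E i \<inter> E j = {}) \<and>
     (\<forall>i\<in>{1..k+1}. \<exists>u :: (real^'n) set \<Rightarrow> real^'n.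
        (\<forall>\<sigma>\<in>maximal_cones \<Sigma>. rational_pt (u \<sigma>)) \<and>
        (\<forall>v. \<phi> i v = Max ((\<lambda>\<sigma>. u \<sigma> \<bullet> v) ` maximal_cones \<Sigma>)) \<and>
        (\<forall>\<sigma>\<in>maximal_cones \<Sigma>. \<forall>v\<in>\<sigma>. \<phi> i v = u \<sigma> \<bullet> v)) \<and>
     (\<forall>i\<in>{1..k+1}. \<forall>j\<in>{1..k+1}. \<forall>\<rho>\<in>E j. \<phi> i \<rho> = (if i = j then 1 else 0))"

definition amenable ::
    "nat \<Rightarrow> (nat \<Rightarrow> (real^'n) set) \<Rightarrow> (nat \<Rightarrow> real^'n) \<Rightarrow> bool" where
  "amenable k E V \<longleftrightarrow> (\<forall>i\<in>{1..k}.
      lattice_pt (V i) \<and>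
      (\<forall>\<rho>\<in>E i. V i \<bullet> \<rho> = -1) \<and>
      (\<forall>j. i < j \<and> j \<le> k + 1 \<longrightarrow> (\<forall>\<rho>\<in>E j. V i \<bullet> \<rho> \<ge> 0)) \<and>
      (\<forall>j. 1 \<le> j \<and> j < i \<longrightarrow> (\<forall>\<rho>\<in>E j. V i \<bullet> \<rho> = 0)))"

definition M_V :: "nat \<Rightarrow> (nat \<Rightarrow> real^'n) \<Rightarrow> (real^'n) set" where
  "M_V k V = {u. \<forall>i\<in>{1..k}. V i \<bullet> u = 0}"

end

theory Submission
  imports Defs
begin


lemma lat_add: "lattice_pt x \<Longrightarrow> lattice_pt y \<Longrightarrow> lattice_pt (x + y)"
  by (simp add: lattice_pt_def)
lemma lat_diff: "lattice_pt x \<Longrightarrow> lattice_pt y \<Longrightarrow> lattice_pt (x - y)"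
  by (simp add: lattice_pt_def)
lemma lat_scale: "c \<in> \<int> \<Longrightarrow> lattice_pt x \<Longrightarrow> lattice_pt (c *\<^sub>R x)"
  by (simp add: lattice_pt_def)
lemma lat_zero: "lattice_pt 0"
  by (simp add: lattice_pt_def)
lemma lat_inner: "lattice_pt x \<Longrightarrow> lattice_pt y \<Longrightarrow> x \<bullet> y \<in> \<int>"
  unfolding inner_vec_def lattice_pt_def by (intro Ints_sum) simp

lemma main_comb:
  fixes p :: "'i \<Rightarrow> real^'n" and V :: "nat \<Rightarrow> real^'n" and u :: "real^'n"
  assumes finI: "finite I" and Ine: "I \<noteq> {}"
    and apos: "\<forall>i\<in>I. a i > 0"
    and rho: "\<rho> = (\<Sum>i\<in>I. a i *\<^sub>R p i)"
    and rhoV: "\<forall>j\<in>{1..k}. V j \<bullet> \<rho> = 0"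
    and pC: "\<forall>i\<in>I. p i \<in> C" and plat: "\<forall>i\<in>I. lattice_pt (p i)"
    and Vlat: "\<forall>j\<in>{1..k}. lattice_pt (V j)"
    and idx: "\<forall>i\<in>I. idx i \<in> {1..k+1}"
    and HV: "\<forall>i\<in>I. \<forall>j\<in>{1..k}. (idx i = j \<longrightarrow> V j \<bullet> p i = -1) \<and> (idx i > j \<longrightarrow> V j \<bullet> p i \<ge> 0)
               \<and> (idx i < j \<longrightarrow> V j \<bullet> p i = 0)"
    and Hu: "\<forall>i\<in>I. u \<bullet> p i = (if idx i = k+1 then 1 else 0)"
    and Cadd: "\<And>x y. x \<in> C \<Longrightarrow> y \<in> C \<Longrightarrow> x + y \<in> C"
    and Cscale: "\<And>x t. x \<in> C \<Longrightarrow> t \<ge> 0 \<Longrightarrow> t *\<^sub>R x \<in> C"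
  shows "\<exists>w\<in>C. lattice_pt w \<and> (\<forall>j\<in>{1..k}. V j \<bullet> w = 0) \<and> u \<bullet> w = 1"
proof -
  have HV1: "V j \<bullet> p i = -1" if "i \<in> I" "j \<in> {1..k}" "idx i = j" for i j using HV[rule_format, OF that(1) that(2)] that(3) by simp
  have HV2: "V j \<bullet> p i \<ge> 0" if "i \<in> I" "j \<in> {1..k}" "idx i > j" for i j using HV[rule_format, OF that(1) that(2)] that(3) by simp
  have HV3: "V j \<bullet> p i = 0" if "i \<in> I" "j \<in> {1..k}" "idx i < j" for i j using HV[rule_format, OF that(1) that(2)] that(3) by simp
  have Vrho: "V j \<bullet> \<rho> = (\<Sum>i\<in>I. a i * (V j \<bullet> p i))" for j
    by (simp add: rho inner_sum_right)
  have ex_top: "\<exists>i0\<in>I. idx i0 = k+1"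
  proof (rule ccontr)
    assume nt: "\<not> ?thesis"
    define m where "m = Max (idx ` I)"
    have mI: "m \<in> idx ` I" unfolding m_def using finI Ine by simp
    then obtain i1 where i1: "i1 \<in> I" "idx i1 = m" by auto
    have mle: "\<forall>i\<in>I. idx i \<le> m" unfolding m_def using finI by simp
    have mk: "m \<in> {1..k}" using idx i1 nt by fastforce
    have f1: "a i1 * (V m \<bullet> p i1) < 0" using HV1[OF i1(1) mk i1(2)] apos i1(1) by simp
    have f2: "\<forall>i\<in>I - {i1}. a i * (V m \<bullet> p i) \<le> 0"
    proof
      fix i assume i: "i \<in> I - {i1}"
      have "idx i = m \<or> idx i < m" using mle i by force
      then have "V m \<bullet> p i \<le> 0" using HV1[of i m] HV3[of i m] i mk by auto
      moreover have "a i > 0" using apos i by blast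
      ultimately show "a i * (V m \<bullet> p i) \<le> 0" by (simp add: mult_nonneg_nonpos)
    qed
    have "(\<Sum>i\<in>I. a i * (V m \<bullet> p i)) = a i1 * (V m \<bullet> p i1) + (\<Sum>i\<in>I - {i1}. a i * (V m \<bullet> p i))"
      using finI i1 by (simp add: sum.remove)
    also have "\<dots> < 0"
    proof -
      have "(\<Sum>i\<in>I - {i1}. a i * (V m \<bullet> p i)) \<le> 0" using f2 by (intro sum_nonpos) blast
      then show ?thesis using f1 by linarith
    qed
    finally show False using rhoV mk Vrho by simp
  qed
  then obtain i0 where i0: "i0 \<in> I" "idx i0 = k+1" by auto
  define pres where "pres j \<longleftrightarrow> (\<exists>i\<in>I. idx i = j)" for j
  have absent: "V j \<bullet> p i = 0" if j: "j \<in> {1..k}" "\<not> pres j" and i: "i \<in> I" for i j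
  proof -
    have nn: "\<forall>i\<in>I. 0 \<le> a i * (V j \<bullet> p i)"
    proof
      fix i assume i: "i \<in> I"
      have "idx i \<noteq> j" using j(2) i by (auto simp: pres_def)
      then have "idx i > j \<or> idx i < j" by arith
      moreover have "a i > 0" using apos i by blast
      moreover have "V j \<bullet> p i \<ge> 0"
        using \<open>idx i > j \<or> idx i < j\<close>
      proof
        assume "idx i > j" then show ?thesis using HV2[OF i j(1)] by simp
      next
        assume "idx i < j" then show ?thesis using HV3[OF i j(1)] by simp
      qed
      ultimately show "0 \<le> a i * (V j \<bullet> p i)" by simp
    qed
    have "(\<Sum>i\<in>I. a i * (V j \<bullet> p i)) = 0" using rhoV j Vrho by simp
    moreover have "(\<Sum>i\<in>I. a i * (V j \<bullet> p i)) = 0 \<longleftrightarrow> (\<forall>i\<in>I. a i * (V j \<bullet> p i) = 0)"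
      by (rule sum_nonneg_eq_0_iff[OF finI]) (use nn in auto)
    ultimately have "\<forall>i\<in>I. a i * (V j \<bullet> p i) = 0" by blast
    then have "a i * (V j \<bullet> p i) = 0" using i by blast
    moreover have "a i > 0" using apos i by blast
    ultimately show ?thesis by simp
  qed
  define sel where "sel j = (SOME i. i \<in> I \<and> idx i = j)" for j
  have sel: "sel j \<in> I \<and> idx (sel j) = j" if "pres j" for j
    unfolding sel_def by (rule someI_ex) (use that in \<open>auto simp: pres_def\<close>)
  define f where "f = rec_nat (p i0) (\<lambda>m x. x + (if pres (k - m) then (V (k - m) \<bullet> x) *\<^sub>R p (sel (k - m)) else 0))"
  have f0: "f 0 = p i0" unfolding f_def by simp
  have fS: "f (Suc m) = f m + (if pres (k - m) then (V (k - m) \<bullet> f m) *\<^sub>R p (sel (k - m)) else 0)" for m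
    unfolding f_def by simp
  have inv: "f m \<in> C \<and> lattice_pt (f m) \<and> u \<bullet> f m = 1 \<and>
      (\<forall>j\<in>{1..k}. j > k - m \<longrightarrow> V j \<bullet> f m = 0) \<and>
      (\<forall>j\<in>{1..k}. j \<le> k - m \<longrightarrow> V j \<bullet> f m \<ge> 0) \<and>
      (\<forall>j\<in>{1..k}. \<not> pres j \<longrightarrow> V j \<bullet> f m = 0)" if "m \<le> k" for m
    using that
  proof (induction m)
    case 0
    have A: "\<forall>j\<in>{1..k}. V j \<bullet> f 0 \<ge> 0" using HV2[OF i0(1)] i0 f0 by auto
    have B: "\<forall>j\<in>{1..k}. \<not> pres j \<longrightarrow> V j \<bullet> f 0 = 0"
    proof (intro ballI impI)
      fix j assume "j \<in> {1..k}" "\<not> pres j"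
      then show "V j \<bullet> f 0 = 0" using absent[of j i0] i0 f0 by simp
    qed
    have C0: "f 0 \<in> C" "lattice_pt (f 0)" "u \<bullet> f 0 = 1" using f0 pC plat Hu i0 by auto
    show ?case using A B C0 by simp
  next
    case (Suc m)
    define j0 where "j0 = k - m"
    have j0: "j0 \<in> {1..k}" using Suc.prems j0_def by auto
    have IH: "f m \<in> C" "lattice_pt (f m)" "u \<bullet> f m = 1"
      "\<forall>j\<in>{1..k}. j > j0 \<longrightarrow> V j \<bullet> f m = 0" "\<forall>j\<in>{1..k}. j \<le> j0 \<longrightarrow> V j \<bullet> f m \<ge> 0"
      "\<forall>j\<in>{1..k}. \<not> pres j \<longrightarrow> V j \<bullet> f m = 0"
      using Suc.IH Suc.prems unfolding j0_def by auto
    have km: "k - Suc m = j0 - 1" using j0_def by simp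
    show ?case
    proof (cases "pres j0")
      case False
      then have fe: "f (Suc m) = f m" using fS j0_def by simp
      have D: "\<forall>j\<in>{1..k}. j > j0 - 1 \<longrightarrow> V j \<bullet> f m = 0"
      proof (intro ballI impI)
        fix j assume j: "j \<in> {1..k}" "j > j0 - 1"
        then have "j = j0 \<or> j > j0" using j0 by auto
        then show "V j \<bullet> f m = 0" using IH(4) IH(6) False j by blast
      qed
      have D2: "\<forall>j\<in>{1..k}. j \<le> j0 - 1 \<longrightarrow> V j \<bullet> f m \<ge> 0" using IH(5) by auto
      show ?thesis unfolding fe km using IH(1,2,3,6) D D2 by blast
    next
      case True
      define r where "r = p (sel j0)"
      define c where "c = V j0 \<bullet> f m"
      have rI: "sel j0 \<in> I" "idx (sel j0) = j0" using sel True by auto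
      have fe: "f (Suc m) = f m + c *\<^sub>R r" using fS True unfolding j0_def c_def r_def by simp
      have c0: "c \<ge> 0" using IH(5) j0 c_def by auto
      have cI: "c \<in> \<int>" using c_def lat_inner Vlat j0 IH(2) by blast
      have rC: "r \<in> C" "lattice_pt r" using pC plat rI r_def by auto
      have ur: "u \<bullet> r = 0" using Hu rI j0 r_def by auto
      have a1: "f (Suc m) \<in> C" unfolding fe by (rule Cadd[OF IH(1) Cscale[OF rC(1) c0]])
      have a2: "lattice_pt (f (Suc m))" unfolding fe by (rule lat_add[OF IH(2) lat_scale[OF cI rC(2)]])
      have a3: "u \<bullet> f (Suc m) = 1" using fe IH ur by (simp add: inner_add_right)
      have a4: "\<forall>j\<in>{1..k}. j > j0 - 1 \<longrightarrow> V j \<bullet> f (Suc m) = 0"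
      proof (intro ballI impI)
        fix j assume j: "j \<in> {1..k}" "j > j0 - 1"
        show "V j \<bullet> f (Suc m) = 0"
        proof (cases "j = j0")
          case True
          have "V j \<bullet> r = -1" using HV1[OF rI(1) j(1)] rI(2) True r_def by simp
          then show ?thesis using fe c_def True by (simp add: inner_add_right)
        next
          case False
          then have jg: "j > j0" using j by auto
          have "V j \<bullet> r = 0" using HV3[OF rI(1) j(1)] rI(2) jg r_def by simp
          then show ?thesis using fe IH(4) j jg by (simp add: inner_add_right)
        qed
      qed
      have a5: "\<forall>j\<in>{1..k}. j \<le> j0 - 1 \<longrightarrow> V j \<bullet> f (Suc m) \<ge> 0"
      proof (intro ballI impI)
        fix j assume j: "j \<in> {1..k}" "j \<le> j0 - 1"
        then have jl: "j < j0" using j0 by auto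
        have "V j \<bullet> r \<ge> 0" using HV2[OF rI(1) j(1)] rI(2) jl r_def by simp
        moreover have "V j \<bullet> f m \<ge> 0" using IH(5) j jl by simp
        ultimately show "V j \<bullet> f (Suc m) \<ge> 0" using fe c0 by (simp add: inner_add_right)
      qed
      have a6: "\<forall>j\<in>{1..k}. \<not> pres j \<longrightarrow> V j \<bullet> f (Suc m) = 0"
      proof (intro ballI impI)
        fix j assume j: "j \<in> {1..k}" "\<not> pres j"
        have "V j \<bullet> r = 0" using absent[OF j rI(1)] r_def by simp
        then show "V j \<bullet> f (Suc m) = 0" using fe IH(6) j by (simp add: inner_add_right)
      qed
      show ?thesis using a1 a2 a3 a4 a5 a6 km by simp
    qed
  qed
  have "f k \<in> C \<and> lattice_pt (f k) \<and> u \<bullet> f k = 1 \<and> (\<forall>j\<in>{1..k}. V j \<bullet> f k = 0)"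
    using inv[of k] by auto
  then show ?thesis by blast
qed



definition gcone :: "(real^'n) set \<Rightarrow> (real^'n) set" where
  "gcone S = {\<Sum>x\<in>S. c x *\<^sub>R x | c. \<forall>x\<in>S. c x \<ge> 0}"

lemma gcone_I: "\<forall>x\<in>S. c x \<ge> 0 \<Longrightarrow> (\<Sum>x\<in>S. c x *\<^sub>R x) \<in> gcone S"
  unfolding gcone_def by blast

lemma gcone_add: "a \<in> gcone S \<Longrightarrow> b \<in> gcone S \<Longrightarrow> a + b \<in> gcone S"
proof -
  assume "a \<in> gcone S" "b \<in> gcone S"
  then obtain ca cb where a: "a = (\<Sum>x\<in>S. ca x *\<^sub>R x)" "\<forall>x\<in>S. ca x \<ge> 0"
    and b: "b = (\<Sum>x\<in>S. cb x *\<^sub>R x)" "\<forall>x\<in>S. cb x \<ge> 0"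
    unfolding gcone_def by blast
  have "a + b = (\<Sum>x\<in>S. (ca x + cb x) *\<^sub>R x)"
    by (simp add: a b sum.distrib scaleR_add_left)
  moreover have "\<forall>x\<in>S. ca x + cb x \<ge> 0" using a b by simp
  ultimately show ?thesis using gcone_I[of S "\<lambda>x. ca x + cb x"] by simp
qed

lemma gcone_scale: "a \<in> gcone S \<Longrightarrow> t \<ge> 0 \<Longrightarrow> t *\<^sub>R a \<in> gcone S"
proof -
  assume "a \<in> gcone S" "t \<ge> 0"
  then obtain ca where a: "a = (\<Sum>x\<in>S. ca x *\<^sub>R x)" "\<forall>x\<in>S. ca x \<ge> 0"
    unfolding gcone_def by blast
  have "t *\<^sub>R a = (\<Sum>x\<in>S. (t * ca x) *\<^sub>R x)"
    by (simp add: a scaleR_sum_right)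
  moreover have "\<forall>x\<in>S. t * ca x \<ge> 0" using a \<open>t \<ge> 0\<close> by simp
  ultimately show ?thesis using gcone_I[of S "\<lambda>x. t * ca x"] by simp
qed

lemma gcone_zero: "0 \<in> gcone S"
proof -
  have "(0::real^'a) = (\<Sum>x\<in>S. (\<lambda>_. 0::real) x *\<^sub>R x)" by simp
  moreover have "\<forall>x\<in>S. (\<lambda>_. 0::real) x \<ge> 0" by simp
  ultimately show ?thesis using gcone_I[of S "\<lambda>_. 0"] by simp
qed

lemma gcone_base: "finite S \<Longrightarrow> x \<in> S \<Longrightarrow> x \<in> gcone S"
proof -
  assume fS: "finite S" and x: "x \<in> S"
  have "(\<Sum>y\<in>S. (if y = x then 1 else 0) *\<^sub>R y) = (\<Sum>y\<in>S. if y = x then y else 0)"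
    by (rule sum.cong) auto
  also have "\<dots> = x" using fS x by simp
  finally have "x = (\<Sum>y\<in>S. (\<lambda>y. if y = x then 1 else 0::real) y *\<^sub>R y)" by simp
  moreover have "\<forall>y\<in>S. (\<lambda>y. if y = x then 1 else 0::real) y \<ge> 0" by simp
  ultimately show ?thesis using gcone_I[of S "\<lambda>y. if y = x then 1 else 0::real"] by simp
qed

lemma gcone_sum: "finite I \<Longrightarrow> (\<forall>i\<in>I. f i \<in> gcone S) \<Longrightarrow> sum f I \<in> gcone S"
  by (induction I rule: finite_induct) (auto simp: gcone_zero gcone_add)

lemma gcone_convex: "convex (gcone S)"
  unfolding convex_def by (auto intro!: gcone_add gcone_scale)

lemma exists_h:
  fixes S :: "(real^'n) set"
  assumes fS: "finite S" and sc: "gcone S \<inter> uminus ` gcone S = {0}"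
  shows "\<exists>h. \<forall>x\<in>S - {0}. h \<bullet> x > 0"
proof -
  define S' where "S' = S - {0}"
  have fS': "finite S'" using fS S'_def by simp
  have n0: "0 \<notin> convex hull S'"
  proof
    assume "0 \<in> convex hull S'"
    then obtain u where u: "\<forall>x\<in>S'. 0 \<le> u x" "sum u S' = 1" "(\<Sum>x\<in>S'. u x *\<^sub>R x) = 0"
      unfolding convex_hull_finite[OF fS'] by blast
    have "\<exists>y\<in>S'. u y \<noteq> 0"
    proof (rule ccontr)
      assume "\<not> ?thesis"
      then have "sum u S' = 0" by simp
      then show False using u(2) by simp
    qed
    then obtain y where y: "y \<in> S'" "u y \<noteq> 0" by blast
    have uy: "u y > 0" using u(1) y by force
    define a where "a = u y *\<^sub>R y"
    have aC: "a \<in> gcone S" unfolding a_def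
      using gcone_scale[OF gcone_base[OF fS] less_imp_le[OF uy]] y S'_def by simp
    have "(\<Sum>x\<in>S'. u x *\<^sub>R x) = a + (\<Sum>x\<in>S' - {y}. u x *\<^sub>R x)"
      unfolding a_def using fS' y by (simp add: sum.remove)
    then have ma: "- a = (\<Sum>x\<in>S' - {y}. u x *\<^sub>R x)" using u(3)
      by (simp add: add_eq_0_iff)
    have "- a \<in> gcone S" unfolding ma
    proof (rule gcone_sum)
      show "finite (S' - {y})" using fS' by simp
      show "\<forall>i\<in>S' - {y}. u i *\<^sub>R i \<in> gcone S"
        using gcone_scale[OF gcone_base[OF fS]] u(1) S'_def by auto
    qed
    then have "a \<in> uminus ` gcone S" by (metis image_eqI minus_minus)
    then have "a = 0" using aC sc by blast
    then show False using uy y S'_def a_def by simp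
  qed
  have "convex (convex hull S')" by simp
  moreover have "closed (convex hull S')"
    by (rule compact_imp_closed[OF finite_imp_compact_convex_hull[OF fS']])
  ultimately obtain h b where hb: "h \<noteq> 0" "0 < b" "\<forall>x\<in>convex hull S'. h \<bullet> x > b"
    using separating_hyperplane_closed_0 n0 by blast
  have "\<forall>x\<in>S'. h \<bullet> x > 0"
  proof
    fix x assume "x \<in> S'"
    then have "x \<in> convex hull S'" by (rule hull_inc)
    then show "h \<bullet> x > 0" using hb by force
  qed
  then show ?thesis unfolding S'_def by blast
qed

lemma h_nonneg:
  fixes S :: "(real^'n) set"
  assumes fS: "finite S" and hp: "\<forall>x\<in>S - {0}. h \<bullet> x > 0" and x: "x \<in> gcone S"
  shows "h \<bullet> x \<ge> 0" and "x \<noteq> 0 \<Longrightarrow> h \<bullet> x > 0"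
proof -
  obtain c where c: "x = (\<Sum>s\<in>S. c s *\<^sub>R s)" "\<forall>s\<in>S. c s \<ge> 0"
    using x unfolding gcone_def by blast
  have hx: "h \<bullet> x = (\<Sum>s\<in>S. c s * (h \<bullet> s))" by (simp add: c(1) inner_sum_right)
  have nn: "\<forall>s\<in>S. c s * (h \<bullet> s) \<ge> 0"
  proof
    fix s assume s: "s \<in> S"
    show "c s * (h \<bullet> s) \<ge> 0"
    proof (cases "s = 0")
      case True then show ?thesis by simp
    next
      case False then have "h \<bullet> s > 0" using hp s by blast
      then show ?thesis using c(2) s by simp
    qed
  qed
  show hge: "h \<bullet> x \<ge> 0" unfolding hx using nn by (simp add: sum_nonneg)
  assume xn: "x \<noteq> 0"
  show "h \<bullet> x > 0"
  proof (rule ccontr)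
    assume "\<not> h \<bullet> x > 0"
    then have "(\<Sum>s\<in>S. c s * (h \<bullet> s)) = 0" using hge hx by simp
    moreover have "(\<Sum>s\<in>S. c s * (h \<bullet> s)) = 0 \<longleftrightarrow> (\<forall>s\<in>S. c s * (h \<bullet> s) = 0)"
      by (rule sum_nonneg_eq_0_iff[OF fS]) (use nn in auto)
    ultimately have z: "\<forall>s\<in>S. c s * (h \<bullet> s) = 0" by blast
    have "\<forall>s\<in>S. c s *\<^sub>R s = 0"
    proof
      fix s assume s: "s \<in> S"
      show "c s *\<^sub>R s = 0"
      proof (cases "s = 0")
        case True then show ?thesis by simp
      next
        case False then have "h \<bullet> s > 0" using hp s by blast
        then have "c s = 0" using z s by force
        then show ?thesis by simp
      qed
    qed
    then have "x = 0" unfolding c(1) by (intro sum.neutral) blast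
    then show False using xn by simp
  qed
qed



lemma normal:
  fixes S :: "(real^'n) set"
  assumes fS: "finite S" and hp: "\<forall>x\<in>S - {0}. h \<bullet> x > 0" and x: "x \<in> gcone S" and xn: "x \<noteq> 0"
  shows "inverse (h \<bullet> x) *\<^sub>R x \<in> convex hull ((\<lambda>s. inverse (h \<bullet> s) *\<^sub>R s) ` (S - {0}))"
proof -
  define S' where "S' = S - {0}"
  have fS': "finite S'" using fS S'_def by simp
  obtain c where c: "x = (\<Sum>s\<in>S. c s *\<^sub>R s)" "\<forall>s\<in>S. c s \<ge> 0"
    using x unfolding gcone_def by blast
  have xS': "x = (\<Sum>s\<in>S'. c s *\<^sub>R s)"
    using sum_diff1[of S "\<lambda>s. c s *\<^sub>R s" 0] c(1) fS unfolding S'_def by (simp split: if_splits)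
  have hx: "h \<bullet> x = (\<Sum>s\<in>S'. c s * (h \<bullet> s))" by (simp add: xS' inner_sum_right)
  have hxp: "h \<bullet> x > 0" using h_nonneg(2)[OF fS hp x xn] .
  have eq: "inverse (h \<bullet> x) *\<^sub>R x = (\<Sum>s\<in>S'. (c s * (h \<bullet> s) / (h \<bullet> x)) *\<^sub>R (inverse (h \<bullet> s) *\<^sub>R s))"
  proof -
    have "inverse (h \<bullet> x) *\<^sub>R x = (\<Sum>s\<in>S'. (inverse (h \<bullet> x) * c s) *\<^sub>R s)"
      by (simp add: xS' scaleR_sum_right)
    also have "\<dots> = (\<Sum>s\<in>S'. (c s * (h \<bullet> s) / (h \<bullet> x)) *\<^sub>R (inverse (h \<bullet> s) *\<^sub>R s))"
    proof (rule sum.cong)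
      fix s assume "s \<in> S'"
      then have "h \<bullet> s > 0" using hp S'_def by blast
      then show "(inverse (h \<bullet> x) * c s) *\<^sub>R s = (c s * (h \<bullet> s) / (h \<bullet> x)) *\<^sub>R (inverse (h \<bullet> s) *\<^sub>R s)"
        by (simp add: field_simps)
    qed simp
    finally show ?thesis .
  qed
  show ?thesis unfolding eq
  proof (rule convex_sum[OF fS' convex_convex_hull])
    show "(\<Sum>s\<in>S'. c s * (h \<bullet> s) / (h \<bullet> x)) = 1"
      using hxp by (simp add: sum_divide_distrib[symmetric] hx[symmetric])
    fix s assume s: "s \<in> S'"
    then have "h \<bullet> s > 0" using hp S'_def by blast
    then show "0 \<le> c s * (h \<bullet> s) / (h \<bullet> x)" using c(2) s hxp S'_def by simp
    show "inverse (h \<bullet> s) *\<^sub>R s \<in> convex hull ((\<lambda>s. inverse (h \<bullet> s) *\<^sub>R s) ` (S - {0}))"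
      using s S'_def by (intro hull_inc) blast
  qed
qed

lemma K_sub:
  fixes S :: "(real^'n) set"
  assumes fS: "finite S" and hp: "\<forall>x\<in>S - {0}. h \<bullet> x > 0"
    and y: "y \<in> convex hull ((\<lambda>s. inverse (h \<bullet> s) *\<^sub>R s) ` (S - {0}))"
  shows "y \<in> gcone S" "h \<bullet> y = 1"
proof -
  have "(\<lambda>s. inverse (h \<bullet> s) *\<^sub>R s) ` (S - {0}) \<subseteq> gcone S"
  proof
    fix z assume "z \<in> (\<lambda>s. inverse (h \<bullet> s) *\<^sub>R s) ` (S - {0})"
    then obtain s where s: "s \<in> S - {0}" "z = inverse (h \<bullet> s) *\<^sub>R s" by blast
    then have "h \<bullet> s > 0" using hp by blast
    then show "z \<in> gcone S" using s gcone_scale[OF gcone_base[OF fS]] by simp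
  qed
  then show "y \<in> gcone S" using y hull_minimal[of _ "gcone S" convex] gcone_convex by blast
  have "(\<lambda>s. inverse (h \<bullet> s) *\<^sub>R s) ` (S - {0}) \<subseteq> {y. h \<bullet> y = 1}"
  proof
    fix z assume "z \<in> (\<lambda>s. inverse (h \<bullet> s) *\<^sub>R s) ` (S - {0})"
    then obtain s where s: "s \<in> S - {0}" "z = inverse (h \<bullet> s) *\<^sub>R s" by blast
    then have "h \<bullet> s > 0" using hp by blast
    then show "z \<in> {y. h \<bullet> y = 1}" using s by simp
  qed
  then show "h \<bullet> y = 1" using y hull_minimal[of _ "{y. h \<bullet> y = 1}" convex] convex_hyperplane by blast
qed



lemma ray_aff_dim:
  fixes s :: "real^'n"
  assumes "s \<noteq> 0"
  shows "aff_dim {t *\<^sub>R s | t. 0 \<le> t} = 1"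
proof -
  define R where "R = {t *\<^sub>R s | t. 0 \<le> (t::real)}"
  have "0 \<in> R" unfolding R_def by (auto intro!: exI[of _ 0])
  then have "0 \<in> affine hull R" by (rule hull_inc)
  then have ad: "aff_dim R = int (dim R)" by (rule aff_dim_zero)
  have sR: "s \<in> R" unfolding R_def by (auto intro!: exI[of _ 1])
  have "R \<subseteq> span {s}" unfolding R_def by (auto intro: span_mul span_base)
  moreover have "{s} \<subseteq> span R" using sR by (auto intro: span_base)
  ultimately have "span R = span {s}" by (simp add: span_eq)
  then have "dim R = dim {s}" by (rule span_eq_dim)
  then have "dim R = 1" using assms by simp
  then show ?thesis using ad R_def by simp
qed

lemma prim:
  fixes s :: "real^'n"
  assumes sl: "lattice_pt s" and sn: "s \<noteq> 0"
  shows "\<exists>p. primitive_generator p {t *\<^sub>R s | t. 0 \<le> t}"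
proof -
  obtain i where si: "s $ i \<noteq> 0" using sn by (metis vec_eq_iff zero_index)
  obtain z :: int where z: "s $ i = of_int z" using sl unfolding lattice_pt_def by (meson Ints_cases)
  have zn: "z \<noteq> 0" using si z by simp
  define q where "q = real_of_int \<bar>z\<bar>"
  have qp: "q > 0" using zn q_def by simp
  define N where "N = {n::nat. n > 0 \<and> lattice_pt ((real n / q) *\<^sub>R s)}"
  have "nat \<bar>z\<bar> \<in> N"
  proof -
    have "real (nat \<bar>z\<bar>) = q" unfolding q_def by simp
    then show ?thesis unfolding N_def using qp zn sl by simp
  qed
  define n0 where "n0 = (LEAST n. n \<in> N)"
  have n0N: "n0 \<in> N" unfolding n0_def by (rule LeastI) fact
  have n0le: "\<And>n. n \<in> N \<Longrightarrow> n0 \<le> n" unfolding n0_def by (rule Least_le)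
  have n0p: "n0 > 0" and n0l: "lattice_pt ((real n0 / q) *\<^sub>R s)" using n0N N_def by auto
  define p where "p = (real n0 / q) *\<^sub>R s"
  have "primitive_generator p {t *\<^sub>R s | t. 0 \<le> t}"
    unfolding primitive_generator_def
  proof (intro conjI ballI impI)
    show "p \<in> {t *\<^sub>R s | t. 0 \<le> t}" unfolding p_def using qp by (auto intro!: exI[of _ "real n0 / q"])
    show "lattice_pt p" using n0l p_def by simp
    show "p \<noteq> 0" unfolding p_def using qp n0p sn by simp
    fix x assume x: "x \<in> {t *\<^sub>R s | t. 0 \<le> t}" and xl: "lattice_pt x"
    then obtain t where t: "x = t *\<^sub>R s" "0 \<le> t" by blast
    show "\<exists>m::nat. x = real m *\<^sub>R p"
    proof (cases "t = 0")
      case True then show ?thesis using t by (auto intro!: exI[of _ 0])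
    next
      case False
      then have tp: "t > 0" using t by simp
      have "x $ i \<in> \<int>" using xl lattice_pt_def by blast
      then obtain w :: int where w: "t * of_int z = of_int w" using t z by (auto elim!: Ints_cases)
      have tq: "t * q = of_int \<bar>w\<bar>"
      proof -
        have "t * q = \<bar>t * of_int z\<bar>" unfolding q_def using tp by (simp add: abs_mult)
        then show ?thesis using w by simp
      qed
      define n where "n = nat \<bar>w\<bar>"
      have rn: "real n = t * q" unfolding n_def using tq by simp
      have tn: "t = real n / q" using rn qp by (simp add: field_simps)
      have np: "n > 0" using rn tp qp by (metis mult_pos_pos of_nat_0_less_iff)
      have nN: "n \<in> N" unfolding N_def using np xl t tn by simp
      define d where "d = n div n0"
      define r where "r = n mod n0"
      have ndr: "n = d * n0 + r" unfolding d_def r_def by simp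
      have rl: "r < n0" unfolding r_def using n0p by simp
      have xr: "(real r / q) *\<^sub>R s = x - real d *\<^sub>R p"
      proof -
        have "real n = real d * real n0 + real r" using ndr by (metis of_nat_add of_nat_mult)
        then have "real r / q = real n / q - real d * (real n0 / q)" using qp by (simp add: field_simps)
        then show ?thesis unfolding p_def t(1) tn by (simp add: scaleR_diff_left)
      qed
      have "lattice_pt ((real r / q) *\<^sub>R s)" unfolding xr
        by (rule lat_diff[OF xl lat_scale]) (auto simp: p_def n0l)
      then have "r = 0"
        using n0le[of r] rl unfolding N_def by fastforce
      then have "x = real d *\<^sub>R p" using xr by simp
      then show ?thesis by blast
    qed
  qed
  then show ?thesis by blast
qed



lemma ray_face:
  fixes S :: "(real^'n) set"
  assumes fS: "finite S" and hp: "\<forall>x\<in>S - {0}. h \<bullet> x > 0"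
    and e: "e extreme_point_of (convex hull ((\<lambda>s. inverse (h \<bullet> s) *\<^sub>R s) ` (S - {0})))"
  shows "{t *\<^sub>R e | t. 0 \<le> t} face_of gcone S"
proof -
  define K where "K = convex hull ((\<lambda>s. inverse (h \<bullet> s) *\<^sub>R s) ` (S - {0}))"
  define R where "R = {t *\<^sub>R e | t. 0 \<le> (t::real)}"
  have eK: "e \<in> K" using e unfolding K_def extreme_point_of_def by blast
  have ext: "\<forall>a\<in>K. \<forall>b\<in>K. e \<notin> open_segment a b" using e unfolding K_def extreme_point_of_def by blast
  have eC: "e \<in> gcone S" and he: "h \<bullet> e = 1" using K_sub[OF fS hp] eK K_def by auto
  have inR: "c *\<^sub>R e \<in> R" if "c \<ge> 0" for c unfolding R_def using that by blast
  have RC: "R \<subseteq> gcone S" unfolding R_def using gcone_scale[OF eC] by blast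
  have cR: "convex R"
    unfolding convex_def
  proof (intro ballI allI impI)
    fix x y and u v :: real assume x: "x \<in> R" and y: "y \<in> R" and uv: "0 \<le> u" "0 \<le> v" "u + v = 1"
    obtain t1 t2 where "x = t1 *\<^sub>R e" "0 \<le> t1" "y = t2 *\<^sub>R e" "0 \<le> t2" using x y R_def by blast
    then have "u *\<^sub>R x + v *\<^sub>R y = (u * t1 + v * t2) *\<^sub>R e" "u * t1 + v * t2 \<ge> 0"
      using uv by (auto simp: scaleR_add_left)
    then show "u *\<^sub>R x + v *\<^sub>R y \<in> R" using inR by simp
  qed
  have main: "a \<in> R \<and> b \<in> R" if a: "a \<in> gcone S" and b: "b \<in> gcone S" and x: "x \<in> R"
    and seg: "x \<in> open_segment a b" for a b x
  proof -
    obtain t where t: "x = t *\<^sub>R e" "0 \<le> t" using x R_def by blast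
    obtain u where u: "a \<noteq> b" "0 < u" "u < 1" "x = (1 - u) *\<^sub>R a + u *\<^sub>R b"
      using seg in_segment(2) by blast
    show ?thesis
    proof (cases "a = 0")
      case True
      then have eq: "u *\<^sub>R b = t *\<^sub>R e" using u t by simp
      have "b = inverse u *\<^sub>R (u *\<^sub>R b)" using u by simp
      also have "\<dots> = (t / u) *\<^sub>R e" unfolding eq by (simp add: divide_inverse_commute)
      finally have "b = (t / u) *\<^sub>R e" .
      then show ?thesis using True inR[of 0] inR[of "t/u"] t u by simp
    next
      case an: False
      show ?thesis
      proof (cases "b = 0")
        case True
        then have eq: "(1 - u) *\<^sub>R a = t *\<^sub>R e" using u t by simp
        have "a = inverse (1 - u) *\<^sub>R ((1 - u) *\<^sub>R a)" using u by simp
        also have "\<dots> = (t / (1 - u)) *\<^sub>R e" unfolding eq by (simp add: divide_inverse_commute)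
        finally have "a = (t / (1 - u)) *\<^sub>R e" .
        then show ?thesis using True inR[of 0] inR[of "t/(1-u)"] t u by simp
      next
        case bn: False
        have ha: "h \<bullet> a > 0" using h_nonneg(2)[OF fS hp a an] .
        have hb: "h \<bullet> b > 0" using h_nonneg(2)[OF fS hp b bn] .
        define a' where "a' = inverse (h \<bullet> a) *\<^sub>R a"
        define b' where "b' = inverse (h \<bullet> b) *\<^sub>R b"
        have a'K: "a' \<in> K" unfolding a'_def K_def by (rule normal[OF fS hp a an])
        have b'K: "b' \<in> K" unfolding b'_def K_def by (rule normal[OF fS hp b bn])
        have hx: "t = (1 - u) * (h \<bullet> a) + u * (h \<bullet> b)"
        proof -
          have "h \<bullet> x = t" using t he by simp
          moreover have "h \<bullet> x = (1 - u) * (h \<bullet> a) + u * (h \<bullet> b)" using u(4) by (simp add: inner_add_right)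
          ultimately show ?thesis by simp
        qed
        have tp: "t > 0" using hx ha hb u by (smt (verit) mult_pos_pos)
        define \<mu> where "\<mu> = u * (h \<bullet> b) / t"
        have m1: "1 - \<mu> = (1 - u) * (h \<bullet> a) / t" unfolding \<mu>_def using hx tp by (simp add: field_simps)
        have m0: "0 < \<mu>" "\<mu> < 1"
        proof -
          show "0 < \<mu>" unfolding \<mu>_def using u hb tp by simp
          have "0 < (1 - u) * (h \<bullet> a) / t" using u ha tp by simp
          then show "\<mu> < 1" using m1 by simp
        qed
        have ecomb: "e = (1 - \<mu>) *\<^sub>R a' + \<mu> *\<^sub>R b'"
        proof -
          have "(1 - \<mu>) *\<^sub>R a' = ((1 - u) / t) *\<^sub>R a" unfolding m1 a'_def using ha tp by (simp add: field_simps)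
          moreover have "\<mu> *\<^sub>R b' = (u / t) *\<^sub>R b" unfolding \<mu>_def b'_def using hb tp by (simp add: field_simps)
          moreover have "e = inverse t *\<^sub>R x" using t tp by simp
          ultimately show ?thesis using u(4) by (simp add: scaleR_add_right divide_inverse_commute)
        qed
        have "a' = b'"
        proof (rule ccontr)
          assume "a' \<noteq> b'"
          then have "e \<in> open_segment a' b'" using ecomb m0 in_segment(2) by blast
          then show False using ext a'K b'K by blast
        qed
        then have ea: "e = a'" and eb: "e = b'" using ecomb by (simp_all add: scaleR_add_left[symmetric])
        have "a = (h \<bullet> a) *\<^sub>R e" using ea ha a'_def by simp
        moreover have "b = (h \<bullet> b) *\<^sub>R e" using eb hb b'_def by simp
        ultimately show ?thesis using inR ha hb by (metis less_imp_le)
      qed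
    qed
  qed
  show ?thesis unfolding face_of_def R_def[symmetric] using RC cR main by blast
qed



lemma decomp:
  fixes \<Sigma> :: "(real^'n) set set"
  assumes fan: "is_fan \<Sigma>" and CS: "C \<in> \<Sigma>" and rC: "\<rho> \<in> C" and rn: "\<rho> \<noteq> 0"
  shows "\<exists>(I::(real^'n) set) p a. finite I \<and> (\<forall>i\<in>I. p i \<in> C \<and> p i \<in> rays \<Sigma> \<and> lattice_pt (p i) \<and> a i \<ge> (0::real))
     \<and> \<rho> = (\<Sum>i\<in>I. a i *\<^sub>R p i)"
proof -
  have rpc: "rat_poly_cone C" and scc: "strictly_convex_cone C" using fan CS unfolding is_fan_def by auto
  have faces: "\<And>F. F face_of C \<Longrightarrow> F \<noteq> {} \<Longrightarrow> F \<in> \<Sigma>" using fan CS unfolding is_fan_def by blast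
  obtain S where fS: "finite S" and Sl: "\<forall>x\<in>S. lattice_pt x" and CSd: "C = gcone S"
    using rpc unfolding rat_poly_cone_def gcone_def by blast
  have sc: "gcone S \<inter> uminus ` gcone S = {0}" using scc unfolding CSd strictly_convex_cone_def by simp
  obtain h where hp: "\<forall>x\<in>S - {0}. h \<bullet> x > 0" using exists_h[OF fS sc] by blast
  define T where "T = (\<lambda>s. inverse (h \<bullet> s) *\<^sub>R s) ` (S - {0})"
  define K where "K = convex hull T"
  define Ext where "Ext = {x. x extreme_point_of K}"
  have fT: "finite T" unfolding T_def using fS by simp
  have ExtT: "Ext \<subseteq> T" unfolding Ext_def K_def by (rule extreme_points_of_convex_hull)
  have fE: "finite Ext" using finite_subset[OF ExtT fT] .
  have KE: "K = convex hull Ext" unfolding K_def Ext_def using Krein_Milman_polytope[OF fT] by simp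
  have per: "\<exists>p l. p \<in> C \<and> p \<in> rays \<Sigma> \<and> lattice_pt p \<and> l > (0::real) \<and> p = l *\<^sub>R e" if eE: "e \<in> Ext" for e
  proof -
    obtain s where s: "s \<in> S - {0}" "e = inverse (h \<bullet> s) *\<^sub>R s" using eE ExtT T_def by blast
    have hs: "h \<bullet> s > 0" using hp s by blast
    have face: "{t *\<^sub>R e | t. 0 \<le> t} face_of C"
      unfolding CSd using ray_face[OF fS hp] eE unfolding Ext_def K_def T_def by blast
    have Req: "{t *\<^sub>R e | t. 0 \<le> t} = {t *\<^sub>R s | t. 0 \<le> t}"
    proof (intro set_eqI iffI)
      fix x assume "x \<in> {t *\<^sub>R e | t. 0 \<le> t}"
      then obtain t where "x = t *\<^sub>R e" "0 \<le> t" by blast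
      then have "x = (t * inverse (h \<bullet> s)) *\<^sub>R s" "0 \<le> t * inverse (h \<bullet> s)" using s(2) hs by auto
      then show "x \<in> {t *\<^sub>R s | t. 0 \<le> t}" by blast
    next
      fix x assume "x \<in> {t *\<^sub>R s | t. 0 \<le> t}"
      then obtain t where "x = t *\<^sub>R s" "0 \<le> t" by blast
      then have "x = (t * (h \<bullet> s)) *\<^sub>R e" "0 \<le> t * (h \<bullet> s)" using s(2) hs by auto
      then show "x \<in> {t *\<^sub>R e | t. 0 \<le> t}" by blast
    qed
    have sn: "s \<noteq> 0" using s by blast
    have sl: "lattice_pt s" using Sl s by blast
    have RS: "{t *\<^sub>R s | t. 0 \<le> t} \<in> \<Sigma>"
    proof (rule faces)
      show "{t *\<^sub>R s | t. 0 \<le> t} face_of C" using face Req by simp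
      have "0 *\<^sub>R s \<in> {t *\<^sub>R s | t. 0 \<le> t}" by blast
      then show "{t *\<^sub>R s | t. 0 \<le> t} \<noteq> {}" by blast
    qed
    obtain p where pg: "primitive_generator p {t *\<^sub>R s | t. 0 \<le> t}" using prim[OF sl sn] by blast
    have pr: "p \<in> rays \<Sigma>" unfolding rays_def using RS pg ray_aff_dim[OF sn] by blast
    have pR: "p \<in> {t *\<^sub>R e | t. 0 \<le> t}" using pg Req unfolding primitive_generator_def by blast
    then obtain l where l: "p = l *\<^sub>R e" "0 \<le> l" by blast
    have "p \<noteq> 0" using pg unfolding primitive_generator_def by blast
    then have lp: "l > 0" using l by (cases "l = 0") auto
    have pC: "p \<in> C" using face_of_imp_subset[OF face] pR by blast
    have "lattice_pt p" using pg unfolding primitive_generator_def by blast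
    then show ?thesis using pC pr lp l by blast
  qed
  then obtain P L where PL: "\<forall>e\<in>Ext. P e \<in> C \<and> P e \<in> rays \<Sigma> \<and> lattice_pt (P e) \<and> L e > (0::real) \<and> P e = L e *\<^sub>R e"
    by metis
  have hr: "h \<bullet> \<rho> > 0" using h_nonneg(2)[OF fS hp] rC rn CSd by blast
  have "inverse (h \<bullet> \<rho>) *\<^sub>R \<rho> \<in> K"
    unfolding K_def T_def using normal[OF fS hp] rC rn CSd by blast
  then obtain w where w: "\<forall>x\<in>Ext. 0 \<le> w x" "sum w Ext = 1" "(\<Sum>x\<in>Ext. w x *\<^sub>R x) = inverse (h \<bullet> \<rho>) *\<^sub>R \<rho>"
    unfolding KE convex_hull_finite[OF fE] by blast
  have "\<rho> = (h \<bullet> \<rho>) *\<^sub>R (inverse (h \<bullet> \<rho>) *\<^sub>R \<rho>)" using hr by simp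
  also have "\<dots> = (\<Sum>x\<in>Ext. (h \<bullet> \<rho> * w x) *\<^sub>R x)" unfolding w(3)[symmetric] by (simp add: scaleR_sum_right)
  also have "\<dots> = (\<Sum>x\<in>Ext. (h \<bullet> \<rho> * w x / L x) *\<^sub>R P x)"
  proof (rule sum.cong)
    fix x assume "x \<in> Ext"
    then have "L x > 0" "P x = L x *\<^sub>R x" using PL by auto
    then show "(h \<bullet> \<rho> * w x) *\<^sub>R x = (h \<bullet> \<rho> * w x / L x) *\<^sub>R P x" by simp
  qed simp
  finally have "\<rho> = (\<Sum>x\<in>Ext. (h \<bullet> \<rho> * w x / L x) *\<^sub>R P x)" .
  moreover have "\<forall>x\<in>Ext. P x \<in> C \<and> P x \<in> rays \<Sigma> \<and> lattice_pt (P x) \<and> h \<bullet> \<rho> * w x / L x \<ge> 0"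
  proof
    fix x assume x: "x \<in> Ext"
    have PLx: "P x \<in> C \<and> P x \<in> rays \<Sigma> \<and> lattice_pt (P x) \<and> L x > 0 \<and> P x = L x *\<^sub>R x"
      using PL x by (rule bspec)
    have "L x > 0" using PLx by (elim conjE)
    moreover have "w x \<ge> 0" using w(1) x by (rule bspec)
    ultimately have "h \<bullet> \<rho> * w x / L x \<ge> 0" using hr by simp
    then show "P x \<in> C \<and> P x \<in> rays \<Sigma> \<and> lattice_pt (P x) \<and> h \<bullet> \<rho> * w x / L x \<ge> 0"
      using conjunct1[OF PLx] conjunct1[OF conjunct2[OF PLx]] conjunct1[OF conjunct2[OF conjunct2[OF PLx]]]
      by (intro conjI)
  qed
  ultimately have "finite Ext \<and> (\<forall>x\<in>Ext. P x \<in> C \<and> P x \<in> rays \<Sigma> \<and> lattice_pt (P x) \<and> h \<bullet> \<rho> * w x / L x \<ge> 0)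
     \<and> \<rho> = (\<Sum>x\<in>Ext. (h \<bullet> \<rho> * w x / L x) *\<^sub>R P x)" using fE by (intro conjI)
  then show ?thesis by (intro exI)
qed



theorem proposition2p12:
  fixes \<Sigma> :: "(real^'n) set set" and k :: nat
    and E :: "nat \<Rightarrow> (real^'n) set" and \<phi> :: "nat \<Rightarrow> real^'n \<Rightarrow> real"
    and V :: "nat \<Rightarrow> real^'n" and C :: "(real^'n) set"
  assumes "complete_fan \<Sigma>"
    and "Qnef_partition \<Sigma> k E \<phi>"
    and "amenable k E V"
    and "C \<in> \<Sigma>"
    and "aff_dim (C \<inter> M_V k V) = 1"
    and "\<forall>\<sigma>\<in>\<Sigma>. \<sigma> \<subseteq> C \<and> aff_dim (\<sigma> \<inter> M_V k V) = 1 \<longrightarrow> \<sigma> = C"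
  shows "\<exists>\<rho>\<in>C \<inter> M_V k V. lattice_pt \<rho> \<and> \<phi> (k + 1) \<rho> = 1"
proof -
  have fan: "is_fan \<Sigma>" using assms(1) unfolding complete_fan_def by simp
  have finS: "finite \<Sigma>" using fan unfolding is_fan_def by simp
  have CS: "C \<in> \<Sigma>" by fact
  have rpc: "rat_poly_cone C" using fan CS unfolding is_fan_def by blast
  obtain S where fS: "finite S" and Sl: "\<forall>x\<in>S. lattice_pt x" and CSd: "C = gcone S"
    using rpc unfolding rat_poly_cone_def gcone_def by blast
  have Cadd: "\<And>x y. x \<in> C \<Longrightarrow> y \<in> C \<Longrightarrow> x + y \<in> C" unfolding CSd by (rule gcone_add)
  have Cscale: "\<And>x t. x \<in> C \<Longrightarrow> t \<ge> 0 \<Longrightarrow> t *\<^sub>R x \<in> C" unfolding CSd by (rule gcone_scale)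
  obtain \<rho> where r: "\<rho> \<in> C \<inter> M_V k V" "\<rho> \<noteq> 0"
  proof -
    have "\<not> (C \<inter> M_V k V \<subseteq> {0})"
    proof
      assume "C \<inter> M_V k V \<subseteq> {0}"
      then have "C \<inter> M_V k V = {} \<or> C \<inter> M_V k V = {0}" by (rule subset_singletonD)
      then show False
      proof (elim disjE)
        assume e: "C \<inter> M_V k V = {}"
        have "aff_dim (C \<inter> M_V k V) = -1" unfolding e by (rule aff_dim_empty_eq)
        then show False using assms(5) by simp
      next
        assume e: "C \<inter> M_V k V = {0}"
        have "aff_dim (C \<inter> M_V k V) = 0" unfolding e by (rule aff_dim_sing)
        then show False using assms(5) by simp
      qed
    qed
    then obtain x where "x \<in> C \<inter> M_V k V" "x \<notin> {0}" unfolding subset_eq by blast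
    then show ?thesis using that by simp
  qed
  have rC: "\<rho> \<in> C" using r(1) by (rule IntD1)
  obtain I p a where Ip0: "finite (I::(real^'n) set) \<and> (\<forall>i\<in>I. p i \<in> C \<and> p i \<in> rays \<Sigma> \<and> lattice_pt (p i) \<and> a i \<ge> (0::real))
    \<and> \<rho> = (\<Sum>i\<in>I. a i *\<^sub>R p i)"
    using decomp[OF fan CS rC r(2)] by blast
  have Ip: "finite I" "\<forall>i\<in>I. p i \<in> C \<and> p i \<in> rays \<Sigma> \<and> lattice_pt (p i) \<and> a i \<ge> (0::real)"
    "\<rho> = (\<Sum>i\<in>I. a i *\<^sub>R p i)"
    using conjunct1[OF Ip0] conjunct1[OF conjunct2[OF Ip0]] conjunct2[OF conjunct2[OF Ip0]] by simp_all
  define I' where "I' = {i\<in>I. a i > 0}"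
  have fI': "finite I'" using Ip(1) I'_def by simp
  have rI': "\<rho> = (\<Sum>i\<in>I'. a i *\<^sub>R p i)"
  proof -
    have "(\<Sum>i\<in>I. a i *\<^sub>R p i) = (\<Sum>i\<in>I'. a i *\<^sub>R p i)"
    proof (rule sum.mono_neutral_right[OF Ip(1)])
      show "I' \<subseteq> I" unfolding I'_def by blast
      show "\<forall>i\<in>I - I'. a i *\<^sub>R p i = 0"
      proof
        fix i assume i: "i \<in> I - I'"
        then have "a i \<ge> 0" using Ip(2) by blast
        moreover have "\<not> a i > 0" using i I'_def by blast
        ultimately show "a i *\<^sub>R p i = 0" by simp
      qed
    qed
    then show ?thesis using Ip(3) by simp
  qed
  have I'ne: "I' \<noteq> {}" using rI' r(2) by auto
  have apos: "\<forall>i\<in>I'. a i > 0" unfolding I'_def by blast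
  have pI': "\<forall>i\<in>I'. p i \<in> C \<and> p i \<in> rays \<Sigma> \<and> lattice_pt (p i)"
    using Ip(2) unfolding I'_def by blast
  define A where "A = {\<tau>\<in>\<Sigma>. C \<subseteq> \<tau>}"
  have "finite A" using finS A_def by simp
  moreover have "A \<noteq> {}" using CS A_def by blast
  ultimately obtain \<sigma> where \<sigma>: "\<sigma> \<in> A" "\<forall>b\<in>A. \<sigma> \<le> b \<longrightarrow> \<sigma> = b"
    using finite_has_maximal by blast
  have \<sigma>max: "\<sigma> \<in> maximal_cones \<Sigma>"
    unfolding maximal_cones_def
  proof (intro CollectI conjI ballI impI)
    show "\<sigma> \<in> \<Sigma>" using \<sigma>(1) A_def by blast
    fix \<tau> assume "\<tau> \<in> \<Sigma>" "\<sigma> \<subseteq> \<tau>"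
    then have "\<tau> \<in> A" using \<sigma>(1) A_def by blast
    then show "\<tau> = \<sigma>" using \<sigma>(2) \<open>\<sigma> \<subseteq> \<tau>\<close> by (metis order_refl)
  qed
  have C\<sigma>: "C \<subseteq> \<sigma>" using \<sigma>(1) A_def by blast
  note qd = assms(2)[unfolded Qnef_partition_def]
  have qn1: "(\<Union>j\<in>{1..k+1}. E j) = rays \<Sigma>" using conjunct1[OF qd] .
  note qn2 = conjunct1[OF conjunct2[OF conjunct2[OF qd]]]
  note qn3 = conjunct2[OF conjunct2[OF conjunct2[OF qd]]]
  have k1: "k + 1 \<in> {1..k+1}" by simp
  obtain U :: "(real^'n) set \<Rightarrow> real^'n" where U0: "(\<forall>\<sigma>\<in>maximal_cones \<Sigma>. rational_pt (U \<sigma>)) \<and>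
        (\<forall>v. \<phi> (k+1) v = Max ((\<lambda>\<sigma>. U \<sigma> \<bullet> v) ` maximal_cones \<Sigma>)) \<and>
        (\<forall>\<sigma>\<in>maximal_cones \<Sigma>. \<forall>v\<in>\<sigma>. \<phi> (k+1) v = U \<sigma> \<bullet> v)"
    using bspec[OF qn2 k1] by (elim exE) (rule that)
  note U = conjunct2[OF conjunct2[OF U0]]
  define u where "u = U \<sigma>"
  have phiC: "\<phi> (k+1) v = u \<bullet> v" if "v \<in> C" for v
  proof -
    have "v \<in> \<sigma>" using C\<sigma> that by (rule subsetD)
    then show ?thesis using bspec[OF bspec[OF U \<sigma>max]] u_def by simp
  qed
  have exidx: "\<exists>j. j \<in> {1..k+1} \<and> p i \<in> E j" if "i \<in> I'" for i
  proof -
    have "p i \<in> rays \<Sigma>" using pI' that by blast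
    then show ?thesis unfolding qn1[symmetric] by (rule UN_E) blast
  qed
  define idx where "idx i = (SOME j. j \<in> {1..k+1} \<and> p i \<in> E j)" for i
  have idx: "idx i \<in> {1..k+1} \<and> p i \<in> E (idx i)" if "i \<in> I'" for i
    unfolding idx_def by (rule someI_ex[OF exidx[OF that]])
  have am: "\<forall>i\<in>{1..k}. lattice_pt (V i) \<and>
      (\<forall>\<rho>\<in>E i. V i \<bullet> \<rho> = -1) \<and>
      (\<forall>j. i < j \<and> j \<le> k + 1 \<longrightarrow> (\<forall>\<rho>\<in>E j. V i \<bullet> \<rho> \<ge> 0)) \<and>
      (\<forall>j. 1 \<le> j \<and> j < i \<longrightarrow> (\<forall>\<rho>\<in>E j. V i \<bullet> \<rho> = 0))"
    using assms(3) unfolding amenable_def .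
  have HV: "\<forall>i\<in>I'. \<forall>j\<in>{1..k}. (idx i = j \<longrightarrow> V j \<bullet> p i = -1) \<and> (idx i > j \<longrightarrow> V j \<bullet> p i \<ge> 0)
               \<and> (idx i < j \<longrightarrow> V j \<bullet> p i = 0)"
  proof (intro ballI conjI impI)
    fix i j assume i: "i \<in> I'" and j: "j \<in> {1..k}"
    have ix: "idx i \<in> {1..k+1}" "p i \<in> E (idx i)" using idx[OF i] by auto
    have amj: "\<forall>\<rho>\<in>E j. V j \<bullet> \<rho> = -1" "\<forall>j'. j < j' \<and> j' \<le> k + 1 \<longrightarrow> (\<forall>\<rho>\<in>E j'. V j \<bullet> \<rho> \<ge> 0)"
      "\<forall>j'. 1 \<le> j' \<and> j' < j \<longrightarrow> (\<forall>\<rho>\<in>E j'. V j \<bullet> \<rho> = 0)"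
      using am j by blast+
    show "idx i = j \<Longrightarrow> V j \<bullet> p i = -1" using amj(1) ix(2) by simp
    show "idx i > j \<Longrightarrow> V j \<bullet> p i \<ge> 0" using amj(2) ix by simp
    show "idx i < j \<Longrightarrow> V j \<bullet> p i = 0"
    proof -
      assume "idx i < j"
      moreover have "1 \<le> idx i" using ix(1) by simp
      ultimately show ?thesis using amj(3) ix(2) by blast
    qed
  qed
  have Hu: "\<forall>i\<in>I'. u \<bullet> p i = (if idx i = k+1 then 1 else 0)"
  proof
    fix i assume i: "i \<in> I'"
    have ix: "idx i \<in> {1..k+1}" "p i \<in> E (idx i)" using idx[OF i] by auto
    have "\<phi> (k+1) (p i) = (if k+1 = idx i then 1 else 0)"
      using bspec[OF bspec[OF bspec[OF qn3 k1] ix(1)] ix(2)] by simp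
    moreover have "\<phi> (k+1) (p i) = u \<bullet> p i" using phiC pI' i by blast
    ultimately show "u \<bullet> p i = (if idx i = k+1 then 1 else 0)" by auto
  qed
  have Vlat: "\<forall>j\<in>{1..k}. lattice_pt (V j)" using am by blast
  have rhoV: "\<forall>j\<in>{1..k}. V j \<bullet> \<rho> = 0" using r(1) unfolding M_V_def by blast
  have idxr: "\<forall>i\<in>I'. idx i \<in> {1..k+1}" using idx by blast
  obtain w where w: "w \<in> C" "lattice_pt w" "\<forall>j\<in>{1..k}. V j \<bullet> w = 0" "u \<bullet> w = 1"
    using main_comb[OF fI' I'ne apos rI' rhoV, of C, OF _ _ Vlat idxr HV Hu Cadd Cscale] pI'
    by blast
  have "w \<in> C \<inter> M_V k V" using w unfolding M_V_def by blast
  moreover have "\<phi> (k + 1) w = 1" using phiC[OF w(1)] w(4) by simp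
  ultimately show ?thesis using w(2) by blast
qed


end
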